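(* Let $G$ be a linear group (i.e. isomorphic to a subgroup of $GL_n(K)$ for some field $K$ and some $n$). If $G$ is discriminating, then $G$ is abelian.
   Context: A group $G$ is called discriminating if for every integer $N$ and every elements $h_1,\dots,h_N \in G\times G$ there exists a group homomorphism $\rho: G\times G \to G$ such that, for each $i$, $\rho(h_i)=1$ if and only if $h_i=1$. *)

theory Defs
  imports "HOL-Algebra.Algebra" "Jordan_Normal_Form.Matrix"
begin

definition GL :: "'k::field itself \<Rightarrow> nat \<Rightarrow> 'k mat monoid" where
  "GL K n = units_of (ring_mat K n ())"

definition linear_group_over :: "'k::field itself \<Rightarrow> ('g, 'b) monoid_scheme \<Rightarrow> bool" where
  "linear_group_over K G \<longleftrightarrow>
     (\<exists>n::nat. \<exists>f. f \<in> hom G (GL K n) \<and> inj_on f (carrier G))"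

definition discriminating :: "('g, 'b) monoid_scheme \<Rightarrow> bool" where
  "discriminating G \<longleftrightarrow>
     (\<forall>hs :: ('g \<times> 'g) list. set hs \<subseteq> carrier (G \<times>\<times> G) \<longrightarrow>
        (\<exists>\<rho> \<in> hom (G \<times>\<times> G) G.
           \<forall>i < length hs. \<rho> (hs ! i) = \<one>\<^bsub>G\<^esub> \<longleftrightarrow> hs ! i = \<one>\<^bsub>G \<times>\<times> G\<^esub>))"

end

theory Submission
  imports Defs "Jordan_Normal_Form.VS_Connect"
begin

lemma disc_step:
  fixes G :: "('g, 'b) monoid_scheme" and k :: nat
  assumes grp: "group G" and disc: "discriminating G"
    and a: "a \<in> carrier G" and b: "b \<in> carrier G" and ab: "a \<otimes>\<^bsub>G\<^esub> b \<noteq> b \<otimes>\<^bsub>G\<^esub> a"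
  shows "\<exists>u v. (\<forall>i<k. u i \<in> carrier G \<and> v i \<in> carrier G) \<and>
     (\<forall>i<k. \<forall>j<k. i \<noteq> j \<longrightarrow> u i \<otimes>\<^bsub>G\<^esub> v j = v j \<otimes>\<^bsub>G\<^esub> u i) \<and>
     (\<forall>i<k. u i \<otimes>\<^bsub>G\<^esub> v i \<noteq> v i \<otimes>\<^bsub>G\<^esub> u i)"
proof (induction k)
  case 0
  then show ?case by auto
next
  case (Suc k)
  interpret G: group G by (rule grp)
  let ?P = "G \<times>\<times> G"
  interpret P: group ?P by (intro DirProd_group grp)
  from Suc obtain u v where uv: "\<forall>i<k. u i \<in> carrier G \<and> v i \<in> carrier G"
    "\<forall>i<k. \<forall>j<k. i \<noteq> j \<longrightarrow> u i \<otimes>\<^bsub>G\<^esub> v j = v j \<otimes>\<^bsub>G\<^esub> u i"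
    "\<forall>i<k. u i \<otimes>\<^bsub>G\<^esub> v i \<noteq> v i \<otimes>\<^bsub>G\<^esub> u i" by blast
  define x where "x i = (if i < k then (u i, \<one>\<^bsub>G\<^esub>) else (\<one>\<^bsub>G\<^esub>, a))" for i
  define y where "y i = (if i < k then (v i, \<one>\<^bsub>G\<^esub>) else (\<one>\<^bsub>G\<^esub>, b))" for i
  have xc: "x i \<in> carrier ?P" if "i < Suc k" for i
    using uv(1) a that by (auto simp: x_def)
  have yc: "y i \<in> carrier ?P" if "i < Suc k" for i
    using uv(1) b that by (auto simp: y_def)
  have comm: "x i \<otimes>\<^bsub>?P\<^esub> y j = y j \<otimes>\<^bsub>?P\<^esub> x i" if "i < Suc k" "j < Suc k" "i \<noteq> j" for i j
    using uv that a b by (auto simp: x_def y_def)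
  have ncomm: "x i \<otimes>\<^bsub>?P\<^esub> y i \<noteq> y i \<otimes>\<^bsub>?P\<^esub> x i" if "i < Suc k" for i
    using uv that a b ab by (auto simp: x_def y_def)
  define z where "z i = x i \<otimes>\<^bsub>?P\<^esub> y i \<otimes>\<^bsub>?P\<^esub> inv\<^bsub>?P\<^esub> (y i \<otimes>\<^bsub>?P\<^esub> x i)" for i
  have zc: "z i \<in> carrier ?P" if "i < Suc k" for i
    using xc[OF that] yc[OF that] unfolding z_def by (intro P.m_closed P.inv_closed)
  have zne: "z i \<noteq> \<one>\<^bsub>?P\<^esub>" if "i < Suc k" for i
  proof
    assume "z i = \<one>\<^bsub>?P\<^esub>"
    then have "x i \<otimes>\<^bsub>?P\<^esub> y i = y i \<otimes>\<^bsub>?P\<^esub> x i"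
      unfolding z_def using P.inv_solve_right'[OF P.one_closed P.m_closed[OF xc[OF that] yc[OF that]]
         P.m_closed[OF yc[OF that] xc[OF that]]] P.l_one[OF P.m_closed[OF yc[OF that] xc[OF that]]]
      by simp
    with ncomm that show False by blast
  qed
  let ?hs = "map z [0..<Suc k]"
  have "set ?hs \<subseteq> carrier ?P"
  proof
    fix h assume "h \<in> set ?hs"
    then obtain i where "i < Suc k" "h = z i" by (auto simp del: upt_Suc)
    then show "h \<in> carrier ?P" using zc by blast
  qed
  with disc obtain \<rho> where rho: "\<rho> \<in> hom ?P G"
    and dr: "\<forall>i < length ?hs. \<rho> (?hs ! i) = \<one>\<^bsub>G\<^esub> \<longleftrightarrow> ?hs ! i = \<one>\<^bsub>?P\<^esub>"
    unfolding discriminating_def by blast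
  interpret h: group_hom ?P G \<rho> by (intro group_hom.intro group_hom_axioms.intro P.group_axioms grp rho)
  have rz: "\<rho> (z i) \<noteq> \<one>\<^bsub>G\<^esub>" if "i < Suc k" for i
    using dr zne[OF that] that by (metis length_map length_upt minus_nat.diff_0 nth_map_upt add_0)
  have A: "\<rho> (x i) \<in> carrier G \<and> \<rho> (y i) \<in> carrier G" if i: "i < Suc k" for i
    using xc[OF i] yc[OF i] by auto
  have B: "\<rho> (x i) \<otimes>\<^bsub>G\<^esub> \<rho> (y i) \<noteq> \<rho> (y i) \<otimes>\<^bsub>G\<^esub> \<rho> (x i)" if i: "i < Suc k" for i
  proof
    assume e: "\<rho> (x i) \<otimes>\<^bsub>G\<^esub> \<rho> (y i) = \<rho> (y i) \<otimes>\<^bsub>G\<^esub> \<rho> (x i)"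
    have "\<rho> (z i) = \<rho> (x i) \<otimes>\<^bsub>G\<^esub> \<rho> (y i) \<otimes>\<^bsub>G\<^esub> inv\<^bsub>G\<^esub> (\<rho> (y i) \<otimes>\<^bsub>G\<^esub> \<rho> (x i))"
      unfolding z_def using xc[OF i] yc[OF i]
      by (simp del: carrier_DirProd add: h.hom_mult h.hom_inv P.m_closed P.inv_closed)
    also have "\<dots> = \<one>\<^bsub>G\<^esub>" unfolding e
      by (rule G.r_inv) (use xc[OF i] yc[OF i] in \<open>auto intro: G.m_closed\<close>)
    finally show False using rz[OF i] by blast
  qed
  have C: "\<rho> (x i) \<otimes>\<^bsub>G\<^esub> \<rho> (y j) = \<rho> (y j) \<otimes>\<^bsub>G\<^esub> \<rho> (x i)"
    if i: "i < Suc k" and j: "j < Suc k" and ij: "i \<noteq> j" for i j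
  proof -
    have "\<rho> (x i \<otimes>\<^bsub>?P\<^esub> y j) = \<rho> (y j \<otimes>\<^bsub>?P\<^esub> x i)" using comm[OF i j ij] by simp
    then show ?thesis using xc[OF i] yc[OF j] by (simp del: carrier_DirProd add: h.hom_mult)
  qed
  show ?case
    apply (rule exI[of _ "\<lambda>i. \<rho> (x i)"], rule exI[of _ "\<lambda>i. \<rho> (y i)"])
    using A B C by blast
qed

definition flatm :: "nat \<Rightarrow> 'a mat \<Rightarrow> 'a vec" where
  "flatm n A = vec (n*n) (\<lambda>i. A $$ (i div n, i mod n))"

lemma idx_bound: "r < n \<Longrightarrow> c < (n::nat) \<Longrightarrow> r * n + c < n*n"
proof -
  assume "r < n" "c < n"
  then have "r * n + c < r*n + n" by simp
  also have "\<dots> = (r+1)*n" by simp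
  also have "\<dots> \<le> n*n" using \<open>r < n\<close> by (intro mult_right_mono) auto
  finally show ?thesis .
qed

lemma flatm_idx:
  assumes "r < n" "c < n"
  shows "vec_index (flatm n A) (r * n + c) = A $$ (r,c)"
  using assms idx_bound[OF assms] by (simp add: flatm_def)

lemma flatm_carrier: "flatm n A \<in> carrier_vec (n*n)"
  by (simp add: flatm_def)

lemma flatm_inj: "inj_on (flatm n) (carrier_mat n n)"
proof
  fix A B :: "'a mat" assume A: "A \<in> carrier_mat n n" and B: "B \<in> carrier_mat n n"
    and e: "flatm n A = flatm n B"
  show "A = B"
  proof (rule eq_matI)
    fix r c assume "r < dim_row B" "c < dim_col B"
    then have rc: "r < n" "c < n" using B by auto
    show "A $$ (r,c) = B $$ (r,c)" using flatm_idx[OF rc, of A] flatm_idx[OF rc, of B] e by simp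
  qed (use A B in auto)
qed

lemma mult_entry:
  assumes "A \<in> carrier_mat n n" "B \<in> carrier_mat n n" "r < n" "c < n"
  shows "(A * B) $$ (r,c) = (\<Sum>l<n. A $$ (r,l) * B $$ (l,c))"
  using assms by (auto simp: scalar_prod_def lessThan_atLeast0 intro!: sum.cong)

lemma key_lin:
  fixes U V :: "nat \<Rightarrow> 'a::field mat"
  assumes UV: "\<And>i. i < k \<Longrightarrow> U i \<in> carrier_mat n n \<and> V i \<in> carrier_mat n n"
    and cm: "\<And>i j. i < k \<Longrightarrow> j < k \<Longrightarrow> i \<noteq> j \<Longrightarrow> U i * V j = V j * U i"
    and nc: "\<And>i. i < k \<Longrightarrow> U i * V i \<noteq> V i * U i"
  shows "k \<le> n*n"
proof -
  interpret vs: vec_space "TYPE('a)" "n*n" .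
  define S where "S = flatm n ` U ` {..<k}"
  have injU: "inj_on U {..<k}"
  proof
    fix i j assume i: "i \<in> {..<k}" and j: "j \<in> {..<k}" and e: "U i = U j"
    show "i = j"
    proof (rule ccontr)
      assume ij: "i \<noteq> j"
      have "U i * V i = U j * V i" using e by simp
      also have "\<dots> = V i * U j" using cm[of j i] i j ij by auto
      also have "\<dots> = V i * U i" using e by simp
      finally show False using nc[of i] i by auto
    qed
  qed
  have injF: "inj_on (flatm n \<circ> U) {..<k}"
    by (rule comp_inj_on[OF injU]) (rule inj_on_subset[OF flatm_inj], use UV in auto)
  have S_eq: "S = (flatm n \<circ> U) ` {..<k}" unfolding S_def by (simp add: image_comp)
  have cardS: "card S = k" unfolding S_eq using card_image[OF injF] by simp
  have Sc: "S \<subseteq> carrier_vec (n*n)" unfolding S_def using flatm_carrier by auto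
  have finS: "finite S" unfolding S_def by simp
  have li: "vs.lin_indpt S"
  proof (rule vs.finite_lin_indpt2[OF finS])
    show "S \<subseteq> carrier_vec (n*n)" using Sc by simp
  next
    fix a assume lc: "vs.lincomb a S = 0\<^sub>v (n*n)"
    show "\<forall>v\<in>S. a v = 0"
    proof
      fix v assume "v \<in> S"
      then obtain j where j: "j < k" and vj: "v = flatm n (U j)" unfolding S_def by auto
      define b where "b i = a (flatm n (U i))" for i
      have sum0: "(\<Sum>i<k. b i * U i $$ (r,c)) = 0" if rc: "r < n" "c < n" for r c
      proof -
        have "0 = vec_index (vs.lincomb a S) (r * n + c)" using lc idx_bound[OF rc] by simp
        also have "\<dots> = (\<Sum>x\<in>S. a x * vec_index x (r * n + c))"
          by (rule vs.lincomb_index[OF idx_bound[OF rc] Sc])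
        also have "\<dots> = (\<Sum>i<k. a (flatm n (U i)) * vec_index (flatm n (U i)) (r * n + c))"
          unfolding S_eq by (subst sum.reindex[OF injF]) simp
        also have "\<dots> = (\<Sum>i<k. b i * U i $$ (r,c))"
          by (simp add: b_def flatm_idx[OF rc])
        finally show ?thesis by simp
      qed
      have ent: "b j * ((U j * V j) $$ (r,c) - (V j * U j) $$ (r,c)) = 0" if rc: "r < n" "c < n" for r c
      proof -
        have Vj: "V j \<in> carrier_mat n n" using UV j by auto
        have "(\<Sum>i<k. b i * ((U i * V j) $$ (r,c) - (V j * U i) $$ (r,c)))
            = (\<Sum>i<k. b i * (\<Sum>l<n. U i $$ (r,l) * V j $$ (l,c)))
              - (\<Sum>i<k. b i * (\<Sum>l<n. V j $$ (r,l) * U i $$ (l,c)))"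
          by (simp add: right_diff_distrib sum_subtractf mult_entry[OF _ Vj rc] mult_entry[OF Vj _ rc] UV)
        also have "(\<Sum>i<k. b i * (\<Sum>l<n. U i $$ (r,l) * V j $$ (l,c)))
            = (\<Sum>l<n. (\<Sum>i<k. b i * U i $$ (r,l)) * V j $$ (l,c))"
          by (simp add: sum_distrib_left sum_distrib_right mult.assoc) (rule sum.swap)
        also have "\<dots> = 0" using sum0 rc by simp
        also have "(\<Sum>i<k. b i * (\<Sum>l<n. V j $$ (r,l) * U i $$ (l,c)))
            = (\<Sum>l<n. V j $$ (r,l) * (\<Sum>i<k. b i * U i $$ (l,c)))"
          by (simp add: sum_distrib_left mult.left_commute) (rule sum.swap)
        also have "\<dots> = 0" using sum0 rc by simp
        finally have tot: "(\<Sum>i<k. b i * ((U i * V j) $$ (r,c) - (V j * U i) $$ (r,c))) = 0" by simp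
        have "(\<Sum>i<k. b i * ((U i * V j) $$ (r,c) - (V j * U i) $$ (r,c)))
            = b j * ((U j * V j) $$ (r,c) - (V j * U j) $$ (r,c))
              + (\<Sum>i\<in>{..<k} - {j}. b i * ((U i * V j) $$ (r,c) - (V j * U i) $$ (r,c)))"
          using j by (subst sum.remove[of _ j]) auto
        also have "(\<Sum>i\<in>{..<k} - {j}. b i * ((U i * V j) $$ (r,c) - (V j * U i) $$ (r,c))) = 0"
          by (rule sum.neutral) (use cm j in auto)
        finally show ?thesis using tot by simp
      qed
      show "a v = 0"
      proof (rule ccontr)
        assume "a v \<noteq> 0"
        then have bj: "b j \<noteq> 0" unfolding b_def vj by simp
        have "U j * V j = V j * U j"
        proof (rule eq_matI)
          fix r c assume "r < dim_row (V j * U j)" "c < dim_col (V j * U j)"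
          then have rc: "r < n" "c < n" using UV j by auto
          show "(U j * V j) $$ (r,c) = (V j * U j) $$ (r,c)" using ent[OF rc] bj by simp
        qed (use UV j in auto)
        then show False using nc j by blast
      qed
    qed
  qed
  have "card S \<le> vs.dim" by (rule vs.li_le_dim(2)[OF vs.fin_dim _ li]) (use Sc in simp)
  then show ?thesis using cardS vs.dim_is_n by simp
qed

theorem theorem6p7:
  fixes G :: "('g, 'b) monoid_scheme" and K :: "'k::field itself"
  assumes "group G"
    and "linear_group_over K G"
    and "discriminating G"
  shows "comm_group G"
proof -
  interpret G: group G by (rule assms(1))
  show ?thesis
  proof (rule G.group_comm_groupI)
    fix a b assume a: "a \<in> carrier G" and b: "b \<in> carrier G"
    show "a \<otimes>\<^bsub>G\<^esub> b = b \<otimes>\<^bsub>G\<^esub> a"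
    proof (rule ccontr)
      assume ab: "a \<otimes>\<^bsub>G\<^esub> b \<noteq> b \<otimes>\<^bsub>G\<^esub> a"
      obtain n :: nat and f where f: "f \<in> hom G (GL K n)" and fi: "inj_on f (carrier G)"
        using assms(2) unfolding linear_group_over_def by blast
      obtain u v where uv: "\<forall>i<n*n+1. u i \<in> carrier G \<and> v i \<in> carrier G"
        "\<forall>i<n*n+1. \<forall>j<n*n+1. i \<noteq> j \<longrightarrow> u i \<otimes>\<^bsub>G\<^esub> v j = v j \<otimes>\<^bsub>G\<^esub> u i"
        "\<forall>i<n*n+1. u i \<otimes>\<^bsub>G\<^esub> v i \<noteq> v i \<otimes>\<^bsub>G\<^esub> u i"
        using disc_step[OF assms(1) assms(3) a b ab, of "n*n+1"] by blast
      have carr: "f x \<in> carrier_mat n n" if "x \<in> carrier G" for x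
      proof -
        have "f x \<in> carrier (GL K n)" using f that by (simp add: hom_def Pi_def)
        then have "f x \<in> Units (ring_mat K n ())" by (simp add: GL_def units_of_carrier)
        then show ?thesis by (simp add: Units_def ring_mat_simps)
      qed
      have fm: "f (x \<otimes>\<^bsub>G\<^esub> y) = f x * f y" if "x \<in> carrier G" "y \<in> carrier G" for x y
      proof -
        have "f (x \<otimes>\<^bsub>G\<^esub> y) = f x \<otimes>\<^bsub>GL K n\<^esub> f y" using f that by (simp add: hom_def)
        then show ?thesis by (simp add: GL_def units_of_mult ring_mat_simps)
      qed
      have "n*n+1 \<le> n*n"
      proof (rule key_lin[of "n*n+1" "\<lambda>i. f (u i)" n "\<lambda>i. f (v i)"])
        fix i assume i: "i < n*n+1"
        show "f (u i) \<in> carrier_mat n n \<and> f (v i) \<in> carrier_mat n n" using uv(1) i carr by blast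
        show "f (u i) * f (v i) \<noteq> f (v i) * f (u i)"
        proof
          assume "f (u i) * f (v i) = f (v i) * f (u i)"
          then have "f (u i \<otimes>\<^bsub>G\<^esub> v i) = f (v i \<otimes>\<^bsub>G\<^esub> u i)" using uv(1) i fm by simp
          then have "u i \<otimes>\<^bsub>G\<^esub> v i = v i \<otimes>\<^bsub>G\<^esub> u i"
            using fi uv(1) i by (auto dest: inj_onD)
          then show False using uv(3) i by blast
        qed
      next
        fix i j assume i: "i < n*n+1" and j: "j < n*n+1" and ij: "i \<noteq> j"
        have "f (u i \<otimes>\<^bsub>G\<^esub> v j) = f (v j \<otimes>\<^bsub>G\<^esub> u i)" using uv(2) i j ij by simp
        then show "f (u i) * f (v j) = f (v j) * f (u i)" using uv(1) i j fm by simp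
      qed
      then show False by simp
    qed
  qed
qed

end
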